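(* For $n\in\{0,1,2,\dots\}$ let \[ b_n=\frac14\frac{(-1)^n}{n!}\sum_{k=0}^{n}(-1)^kS(n,k)(2k-1)!!,\qquad d_n=\frac{(-1)^n}{n!}\sum_{k=0}^{n}(-1)^kS(n,k)(2k-3)!!, \] so that $d_0=-1$, $d_1=1$, $d_2=0$, $d_3=\frac16$, $b_0=b_1=b_2=\frac14$, and $b_3=\frac7{24}$. For $n\in\mathbb{N}$ let $D^{(n)}=(D_{ij})_{1\le i,j\le n}$ be the $n\times n$ matrix with $D_{ij}=d_{i-j+1}$ if $j\le i$, $D_{i,i+1}=-1$, and $D_{ij}=0$ if $j\ge i+2$. Let $B^{(n)}=(B_{ij})_{1\le i,j\le n}$ be the $n\times n$ matrix with $B_{ij}=b_{i-j+1}$ if $j\le i+1$ and $B_{ij}=0$ if $j\ge i+2$. Then for every $n\in\mathbb{N}$, \[ b_n=\frac14\det D^{(n)}\qquad\text{and}\qquad d_n=(-1)^{n-1}4^n\det B^{(n)}. \]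
   Context: $S(n,k)$ are the Stirling numbers of the second kind, given by $\frac{(e^x-1)^k}{k!}=\sum_{n\ge k}S(n,k)\frac{x^n}{n!}$. Double factorials: $(2j-1)!!=1\cdot3\cdots(2j-1)$ for $j\ge1$, and $[-(2j+1)]!!=(-1)^j/(2j-1)!!$ for $j\ge0$, so $(-1)!!=1$ and $(-3)!!=-1$. *)

theory Defs
  imports Complex_Main "HOL-Combinatorics.Stirling" "Jordan_Normal_Form.Determinant"
begin

text \<open>odd_dfact k = (2k-1)!! for integer k, with the convention
  [-(2j+1)]!! = (-1)^j / (2j-1)!! for j >= 0 (so (-1)!! = 1, (-3)!! = -1).\<close>
definition odd_dfact :: "int \<Rightarrow> real" where
  "odd_dfact k =
     (if k \<ge> 0 then (\<Prod>i=1..nat k. 2 * real i - 1)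
      else (-1) ^ nat (-k) / (\<Prod>i=1..nat (-k). 2 * real i - 1))"

definition b_seq :: "nat \<Rightarrow> real" where
  "b_seq n = 1/4 * ((-1) ^ n / fact n) *
     (\<Sum>k=0..n. (-1) ^ k * real (Stirling n k) * odd_dfact (int k))"

definition d_seq :: "nat \<Rightarrow> real" where
  "d_seq n = ((-1) ^ n / fact n) *
     (\<Sum>k=0..n. (-1) ^ k * real (Stirling n k) * odd_dfact (int k - 1))"

text \<open>Matrices with 0-based indices i, j < n; entry (i,j) corresponds to the
  paper's entry (i+1, j+1).\<close>
definition D_mat :: "nat \<Rightarrow> real mat" where
  "D_mat n = mat n n (\<lambda>(i, j). if j \<le> i then d_seq (i - j + 1)
                               else if j = i + 1 then -1 else 0)"

definition B_mat :: "nat \<Rightarrow> real mat" where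
  "B_mat n = mat n n (\<lambda>(i, j). if j \<le> i + 1 then b_seq (i + 1 - j) else 0)"

end

theory Submission
  imports Defs "HOL-Computational_Algebra.Formal_Power_Series"
begin

definition KM :: "(nat \<Rightarrow> real) \<Rightarrow> real \<Rightarrow> nat \<Rightarrow> (nat \<Rightarrow> real) \<Rightarrow> real mat" where
  "KM a c n v = mat n n (\<lambda>(i,j). if j = 0 then v i else if j = i+1 then c
      else if j \<le> i then a (i-j+1) else 0)"

lemma KM_del00: "mat_delete (KM a c (Suc n) v) 0 0 = KM a c n (\<lambda>i. a (i+1))"
  unfolding KM_def mat_delete_def by (rule eq_matI) auto

lemma KM_del01: "mat_delete (KM a c (Suc n) v) 0 (Suc 0) = KM a c n (\<lambda>i. v (i+1))"
  unfolding KM_def mat_delete_def by (rule eq_matI) auto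

lemma KM_step: "det (KM a c (Suc (Suc n)) v) =
   v 0 * det (KM a c (Suc n) (\<lambda>i. a (i+1))) - c * det (KM a c (Suc n) (\<lambda>i. v (i+1)))"
proof -
  have C: "KM a c (Suc (Suc n)) v \<in> carrier_mat (Suc (Suc n)) (Suc (Suc n))"
    unfolding KM_def by auto
  have "det (KM a c (Suc (Suc n)) v) = (\<Sum>j<Suc (Suc n). KM a c (Suc (Suc n)) v $$ (0,j) * cofactor (KM a c (Suc (Suc n)) v) 0 j)"
    by (rule laplace_expansion_row[OF C]) simp
  also have "\<dots> = (\<Sum>j<2. KM a c (Suc (Suc n)) v $$ (0,j) * cofactor (KM a c (Suc (Suc n)) v) 0 j)"
    by (rule sum.mono_neutral_right) (auto simp: KM_def)
  also have "\<dots> = v 0 * det (KM a c (Suc n) (\<lambda>i. a (i+1))) - c * det (KM a c (Suc n) (\<lambda>i. v (i+1)))"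
  proof -
    have e: "KM a c (Suc (Suc n)) v $$ (0,0) = v 0" "KM a c (Suc (Suc n)) v $$ (0,Suc 0) = c"
      by (auto simp: KM_def)
    show ?thesis
      by (simp only: numeral_2_eq_2 lessThan_Suc lessThan_0 sum.insert finite.intros, simp add: cofactor_def KM_del00 KM_del01 e)
  qed
  finally show ?thesis .
qed

lemma KM_1: "det (KM a c (Suc 0) v) = v 0"
  by (subst det_def') (auto simp: KM_def)

lemma KM_0: "det (KM a c 0 v) = 1"
  by (subst det_def') (auto simp: KM_def)

lemma KM_formula: "det (KM a c (Suc n) v) = (\<Sum>k\<le>n. (-c)^k * v k * det (KM a c (n-k) (\<lambda>i. a (i+1))))"
proof (induction n arbitrary: v)
  case 0 then show ?case by (simp add: KM_1 KM_0)
next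
  case (Suc n)
  have "det (KM a c (Suc (Suc n)) v) = v 0 * det (KM a c (Suc n) (\<lambda>i. a (i+1))) - c * (\<Sum>k\<le>n. (-c)^k * v (k+1) * det (KM a c (n-k) (\<lambda>i. a (i+1))))"
    unfolding KM_step Suc.IH[of "\<lambda>i. v (i+1)"] by simp
  then show ?case
    unfolding sum.atMost_Suc_shift
    by (simp add: sum_distrib_left sum_negf algebra_simps)
qed

lemma odd_rec: "odd_dfact (int (Suc k)) = (2*real k + 1) * odd_dfact (int k)"
  unfolding odd_dfact_def by (simp only: nat_int) (simp add: prod.cl_ivl_Suc algebra_simps)

lemma odd_rec2: "odd_dfact (int k) = (2*real k - 1) * odd_dfact (int k - 1)"
proof (cases k)
  case 0 then show ?thesis by (simp add: odd_dfact_def)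
next
  case (Suc m) then show ?thesis using odd_rec[of m] by simp
qed

definition EE :: "real fps" where "EE = fps_exp (-1) - 1"

lemma EE0[simp]: "fps_nth EE 0 = 0" by (simp add: EE_def)

lemma EE_deriv: "fps_deriv EE = - (EE + 1)"
proof -
  have "fps_const (-1::real) * fps_exp (-1) = - fps_exp (-1)"
    by (metis fps_const_neg fps_const_1_eq_1 mult_minus_left mult_1)
  then show ?thesis by (simp add: EE_def)
qed

lemma EE_pow: "fps_nth (EE ^ k) n = (-1)^n * fact k * real (Stirling n k) / fact n"
proof (induction n arbitrary: k)
  case 0
  then show ?case by (cases k) (auto simp: fps_nth_power_0)
next
  case (Suc n)
  show ?case
  proof (cases k)
    case 0 then show ?thesis by simp
  next
    case (Suc j)
    have "fps_deriv (EE ^ Suc j) = - (fps_const (real (Suc j)) * (EE ^ Suc j + EE ^ j))"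
    proof -
      have "fps_deriv (EE ^ Suc j) = of_nat (Suc j) * fps_deriv EE * EE ^ j"
        by (simp only: fps_deriv_power' diff_Suc_1)
      then show ?thesis unfolding EE_deriv fps_of_nat by (simp add: algebra_simps)
    qed
    hence "fps_nth (fps_deriv (EE ^ Suc j)) n = - (of_nat (Suc j) * (fps_nth (EE ^ Suc j) n + fps_nth (EE ^ j) n))"
      by (simp only: fps_neg_nth fps_mult_left_const_nth fps_add_nth)
    hence "of_nat (Suc n) * fps_nth (EE ^ Suc j) (Suc n) = - (of_nat (Suc j) * (fps_nth (EE ^ Suc j) n + fps_nth (EE ^ j) n))"
      by (simp only: fps_deriv_nth Suc_eq_plus1)
    also have "\<dots> = - (of_nat (Suc j) * ((-1)^n * fact (Suc j) * real (Stirling n (Suc j)) / fact n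
          + (-1)^n * fact j * real (Stirling n j) / fact n))"
      using Suc.IH[of j] Suc.IH[of "Suc j"] by (simp del: power_Suc fact_Suc)
    also have "\<dots> = of_nat (Suc n) * ((-1)^(Suc n) * fact (Suc j) * real (Stirling (Suc n) (Suc j)) / fact (Suc n))"
    proof -
      have A: "(fact (Suc j)::real) = (real j+1)*fact j" by simp
      have B: "(fact (Suc n)::real) = (real n+1)*fact n" by simp
      have C: "real (Stirling (Suc n) (Suc j)) = (real j+1)*real (Stirling n (Suc j)) + real (Stirling n j)" by (simp add: algebra_simps)
      have D: "(-1::real) ^ Suc n = - ((-1) ^ n)" by simp
      have E: "(fact n::real) \<noteq> 0" "real n + 1 \<noteq> 0" by auto
      have F: "real (Suc n) * (Y / fact (Suc n)) = Y / fact n" for Y :: real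
        by (simp del: of_nat_Suc)
      show ?thesis unfolding F A C D using E by (simp add: field_simps)
    qed
    finally have "real (Suc n) * fps_nth (EE ^ Suc j) (Suc n) = real (Suc n) * ((-1)^(Suc n) * fact (Suc j) * real (Stirling (Suc n) (Suc j)) / fact (Suc n))" by simp
    then have "fps_nth (EE ^ Suc j) (Suc n) = (-1)^(Suc n) * fact (Suc j) * real (Stirling (Suc n) (Suc j)) / fact (Suc n)"
      by (subst (asm) mult_cancel_left) (simp del: of_nat_Suc)
    then show ?thesis using Suc by simp
  qed
qed

definition FF :: "real fps" where "FF = Abs_fps (\<lambda>k. odd_dfact (int k) / fact k)"
definition GG :: "real fps" where "GG = Abs_fps (\<lambda>k. odd_dfact (int k - 1) / fact k)"
definition UU :: "real fps" where "UU = - EE"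

lemma UU0[simp]: "fps_nth UU 0 = 0" by (simp add: UU_def)

lemma UU_pow: "fps_nth (UU ^ i) n = (-1)^i * fps_nth (EE ^ i) n"
  unfolding UU_def by (cases "even i") simp_all

lemma FF_comp: "fps_nth (FF oo UU) n = 4 * b_seq n"
  unfolding fps_compose_nth b_seq_def
  by (simp add: UU_pow EE_pow FF_def sum_distrib_left) (rule sum.cong, simp_all add: field_simps)

lemma GG_comp: "fps_nth (GG oo UU) n = d_seq n"
  unfolding fps_compose_nth d_seq_def
  by (simp add: UU_pow EE_pow GG_def sum_distrib_left) (rule sum.cong, simp_all add: field_simps)

lemma Frec: "real (Suc k) * fps_nth FF (Suc k) = (2*real k + 1) * fps_nth FF k"
  unfolding FF_def by (simp add: odd_rec field_simps del: of_nat_Suc)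

lemma Grec: "real (Suc k) * fps_nth GG (Suc k) = (2*real k - 1) * fps_nth GG k"
proof -
  have "odd_dfact (int (Suc k) - 1) = odd_dfact (int k)" by simp
  then show ?thesis unfolding GG_def by (simp add: odd_rec2[of k] field_simps del: of_nat_Suc)
qed

definition PP :: "real fps" where "PP = 1 - fps_const 2 * fps_X"

lemma PP_nth: "fps_nth (f * PP) n = fps_nth f n - 2 * (if n = 0 then 0 else fps_nth f (n - 1))"
proof -
  have "f * PP = f - fps_const 2 * (fps_X * f)" unfolding PP_def by (simp add: algebra_simps)
  then show ?thesis by simp
qed

lemma FF_ode: "fps_deriv FF * PP = FF"
proof (rule fps_ext)
  fix n
  show "fps_nth (fps_deriv FF * PP) n = fps_nth FF n"
  proof (cases n)
    case 0 then show ?thesis using Frec[of 0] by (simp add: PP_nth del: fps_mult_nth_0)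
  next
    case (Suc m)
    have "fps_nth (fps_deriv FF * PP) n = real (Suc (Suc m)) * fps_nth FF (Suc (Suc m)) - 2 * (real (Suc m) * fps_nth FF (Suc m))"
      unfolding PP_nth Suc fps_deriv_nth by (simp only: nat.distinct if_False diff_Suc_1 Suc_eq_plus1[symmetric])
    also have "\<dots> = fps_nth FF n" unfolding Suc by (simp only: Frec[of "Suc m"]) (simp add: algebra_simps)
    finally show ?thesis .
  qed
qed

lemma GG_ode: "fps_deriv GG * PP = - GG"
proof (rule fps_ext)
  fix n
  show "fps_nth (fps_deriv GG * PP) n = fps_nth (- GG) n"
  proof (cases n)
    case 0 then show ?thesis using Grec[of 0] by (simp add: PP_nth del: fps_mult_nth_0)
  next
    case (Suc m)
    have "fps_nth (fps_deriv GG * PP) n = real (Suc (Suc m)) * fps_nth GG (Suc (Suc m)) - 2 * (real (Suc m) * fps_nth GG (Suc m))"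
      unfolding PP_nth Suc fps_deriv_nth by (simp only: nat.distinct if_False diff_Suc_1 Suc_eq_plus1[symmetric])
    also have "\<dots> = fps_nth (- GG) n" unfolding Suc by (simp only: Grec[of "Suc m"]) (simp add: algebra_simps)
    finally show ?thesis .
  qed
qed

lemma FG: "FF * GG = fps_const (-1)"
proof -
  have "fps_deriv (FF * GG) * PP = (fps_deriv FF * PP) * GG + FF * (fps_deriv GG * PP)"
    by (simp add: algebra_simps)
  also have "\<dots> = 0" unfolding FF_ode GG_ode by simp
  finally have "fps_deriv (FF * GG) * PP = 0" .
  moreover have "PP \<noteq> 0"
  proof
    assume "PP = 0" then have "fps_nth PP 0 = 0" by simp
    then show False by (simp add: PP_def)
  qed
  ultimately have "fps_deriv (FF * GG) = 0" by simp
  then have "FF * GG = fps_const (fps_nth (FF * GG) 0)" using fps_deriv_eq_0_iff by blast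
  also have "fps_nth (FF * GG) 0 = -1" by (simp add: FF_def GG_def odd_dfact_def)
  finally show ?thesis .
qed

lemma conv_fps: "Abs_fps (\<lambda>n. 4 * b_seq n) * Abs_fps d_seq = fps_const (-1)"
proof -
  have "Abs_fps (\<lambda>n. 4 * b_seq n) = FF oo UU" by (rule fps_ext) (simp add: FF_comp)
  moreover have "Abs_fps d_seq = GG oo UU" by (rule fps_ext) (simp add: GG_comp)
  ultimately show ?thesis by (simp add: fps_compose_mult_distrib[symmetric] FG)
qed

lemma conv1: assumes "m \<ge> 1" shows "(\<Sum>i\<le>m. 4 * b_seq i * d_seq (m - i)) = 0"
proof -
  have "fps_nth (Abs_fps (\<lambda>n. 4 * b_seq n) * Abs_fps d_seq) m = 0" using assms unfolding conv_fps by simp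
  then show ?thesis unfolding fps_mult_nth atLeast0AtMost by simp
qed

lemma conv2: assumes "m \<ge> 1" shows "(\<Sum>i\<le>m. d_seq i * (4 * b_seq (m - i))) = 0"
proof -
  have "fps_nth (Abs_fps d_seq * Abs_fps (\<lambda>n. 4 * b_seq n)) m = 0" using assms unfolding mult.commute[of "Abs_fps d_seq"] conv_fps by simp
  then show ?thesis unfolding fps_mult_nth atLeast0AtMost by simp
qed


lemma b0: "b_seq 0 = 1/4" by (simp add: b_seq_def odd_dfact_def)
lemma d0: "d_seq 0 = -1" by (simp add: d_seq_def odd_dfact_def)

lemma D_KM: "D_mat n = KM d_seq (-1) n (\<lambda>i. d_seq (i+1))"
  unfolding D_mat_def KM_def by (rule eq_matI) auto

lemma B_KM: "B_mat n = KM b_seq (1/4) n (\<lambda>i. b_seq (i+1))"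
  unfolding B_mat_def KM_def by (rule eq_matI) (auto simp: b0 Suc_diff_le)

lemma detD: "det (KM d_seq (-1) n (\<lambda>i. d_seq (i+1))) = 4 * b_seq n"
proof (induction n rule: less_induct)
  case (less n)
  show ?case
  proof (cases n)
    case 0 then show ?thesis by (simp add: KM_0 b0)
  next
    case (Suc m)
    have "det (KM d_seq (-1) n (\<lambda>i. d_seq (i+1))) = (\<Sum>k\<le>m. d_seq (k+1) * (4 * b_seq (m-k)))"
      unfolding Suc KM_formula
    proof (rule sum.cong)
      fix k assume "k \<in> {..m}"
      then have "m - k < n" using Suc by auto
      from less.IH[OF this] show "(- (-1::real))^k * d_seq (k+1) * det (KM d_seq (-1) (m-k) (\<lambda>i. d_seq (i+1))) = d_seq (k+1) * (4 * b_seq (m-k))" by simp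
    qed simp
    moreover have "(\<Sum>i\<le>Suc m. d_seq i * (4 * b_seq (Suc m - i))) = 0" by (rule conv2) simp
    ultimately show ?thesis unfolding sum.atMost_Suc_shift d0 Suc by simp
  qed
qed

lemma detB: "det (KM b_seq (1/4) n (\<lambda>i. b_seq (i+1))) = - ((-1/4)^n) * d_seq n"
proof (induction n rule: less_induct)
  case (less n)
  show ?case
  proof (cases n)
    case 0 then show ?thesis by (simp add: KM_0 d0)
  next
    case (Suc m)
    have "det (KM b_seq (1/4) n (\<lambda>i. b_seq (i+1))) = (\<Sum>k\<le>m. (-(1/4))^k * b_seq (k+1) * (- ((-1/4)^(m-k)) * d_seq (m-k)))"
      unfolding Suc KM_formula
    proof (rule sum.cong)
      fix k assume "k \<in> {..m}"
      then have "m - k < n" using Suc by auto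
      from less.IH[OF this] show "(- (1/4::real))^k * b_seq (k+1) * det (KM b_seq (1/4) (m-k) (\<lambda>i. b_seq (i+1))) = (-(1/4))^k * b_seq (k+1) * (- ((-1/4)^(m-k)) * d_seq (m-k))" by simp
    qed simp
    also have "\<dots> = - ((-1/4)^m) * (\<Sum>k\<le>m. b_seq (k+1) * d_seq (m-k))"
      unfolding sum_distrib_left
    proof (rule sum.cong)
      fix k assume "k \<in> {..m}"
      then have "(-(1/4::real))^k * (-1/4)^(m-k) = (-1/4)^m"
        by (simp add: power_add[symmetric])
      then show "(-(1/4))^k * b_seq (k+1) * (- ((-1/4)^(m-k)) * d_seq (m-k)) = - ((-1/4)^m) * (b_seq (k+1) * d_seq (m-k))"
        by (simp add: algebra_simps)
    qed simp
    finally have e: "det (KM b_seq (1/4) n (\<lambda>i. b_seq (i+1))) = - ((-1/4)^m) * (\<Sum>k\<le>m. b_seq (k+1) * d_seq (m-k))" .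
    have "(\<Sum>i\<le>Suc m. 4 * b_seq i * d_seq (Suc m - i)) = 0" by (rule conv1) simp
    then have "(\<Sum>k\<le>m. b_seq (k+1) * d_seq (m-k)) = - d_seq (Suc m) / 4"
      unfolding sum.atMost_Suc_shift b0 by (simp add: sum_distrib_left[symmetric] mult.assoc)
    then show ?thesis using e Suc by simp
  qed
qed

theorem theorem6p5:
  fixes n :: nat
  assumes "n \<ge> 1"
  shows "b_seq n = 1/4 * det (D_mat n)
       \<and> d_seq n = (-1) ^ (n - 1) * 4 ^ n * det (B_mat n)"
proof
  show "b_seq n = 1/4 * det (D_mat n)" unfolding D_KM detD by simp
  obtain m where m: "n = Suc m" using assms by (cases n) auto
  show "d_seq n = (-1) ^ (n - 1) * 4 ^ n * det (B_mat n)"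
  proof -
    have "(-1::real)^m * 4^m * (-1/4)^m = 1" by (simp add: power_mult_distrib[symmetric])
    then show ?thesis unfolding B_KM detB m by (simp add: algebra_simps)
  qed
qed

end
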